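(* Let $K$ be a valued field and $d\ge 1$. Then the VC-dimension of $\operatorname{Conv}_{K^d}$ is exactly $d+1$: some subset of $K^d$ of size $d+1$ is shattered by $\operatorname{Conv}_{K^d}$, and no subset of size $d+2$ is.
   Context: $K$ is a field with valuation $\nu$ and valuation ring $\mathcal{O}=\{x:\nu(x)\ge0\}$. A set $X\subseteq K^d$ is convex if it is closed under combinations $\sum_{i=1}^n\alpha_ix_i$ with $x_i\in X$, $\alpha_i\in\mathcal{O}$, $\sum\alpha_i=1$; $\operatorname{Conv}_{K^d}$ is the family of all convex subsets of $K^d$. A family $\mathcal{F}\subseteq\mathcal{P}(X)$ shatters $Y\subseteq X$ if $\{S\cap Y:S\in\mathcal{F}\}=\mathcal{P}(Y)$; the VC-dimension of $\mathcal{F}$ is the largest $k$ such that $\mathcal{F}$ shatters some $k$-element set (or $\infty$). *)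

theory Defs
  imports Main "HOL-Library.Extended_Nat"
begin

text \<open>A (Krull) valuation on a field 'a with value group 'g. The value of 0 is
  the formal symbol infinity; we encode this by only constraining v on nonzero
  elements (v 0 is irrelevant and never used).\<close>
definition valuation :: "('a::field \<Rightarrow> 'g::linordered_ab_group_add) \<Rightarrow> bool" where
  "valuation v \<longleftrightarrow>
     (\<forall>x y. x \<noteq> 0 \<longrightarrow> y \<noteq> 0 \<longrightarrow> v (x * y) = v x + v y) \<and>
     (\<forall>x y. x \<noteq> 0 \<longrightarrow> y \<noteq> 0 \<longrightarrow> x + y \<noteq> 0 \<longrightarrow> min (v x) (v y) \<le> v (x + y))"

text \<open>Valuation ring O = {x. nu x >= 0} (0 has value infinity, so 0 is in O).\<close>
definition val_ring :: "('a::field \<Rightarrow> 'g::linordered_ab_group_add) \<Rightarrow> 'a set" where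
  "val_ring v = {x. x = 0 \<or> 0 \<le> v x}"

text \<open>Points of K^d are functions from a finite index type 'n with CARD('n) = d.\<close>
definition val_convex :: "('a::field \<Rightarrow> 'g::linordered_ab_group_add) \<Rightarrow> ('n \<Rightarrow> 'a) set \<Rightarrow> bool" where
  "val_convex v X \<longleftrightarrow>
     (\<forall>(n::nat) (x::nat \<Rightarrow> 'n \<Rightarrow> 'a) (\<alpha>::nat \<Rightarrow> 'a).
        (\<forall>i<n. x i \<in> X \<and> \<alpha> i \<in> val_ring v) \<and> (\<Sum>i<n. \<alpha> i) = 1 \<longrightarrow>
        (\<lambda>j. \<Sum>i<n. \<alpha> i * x i j) \<in> X)"

definition Conv :: "('a::field \<Rightarrow> 'g::linordered_ab_group_add) \<Rightarrow> ('n \<Rightarrow> 'a) set set" where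
  "Conv v = {X. val_convex v X}"

definition shatters :: "'b set set \<Rightarrow> 'b set \<Rightarrow> bool" where
  "shatters F Y \<longleftrightarrow> {S \<inter> Y | S. S \<in> F} = Pow Y"

definition vc_dim :: "'b set set \<Rightarrow> enat" where
  "vc_dim F = Sup {enat (card Y) | Y. finite Y \<and> shatters F Y}"

end

theory Submission imports Defs "HOL-Analysis.Cartesian_Space" begin

lemma dep_vec:
  fixes D :: "('a::field^'n) set"
  assumes "finite D" "card D > CARD('n)"
  shows "\<exists>u. (\<exists>w\<in>D. u w \<noteq> 0) \<and> (\<Sum>w\<in>D. u w *s w) = 0"
proof -
  have "\<not> vec.independent D"
  proof
    assume "vec.independent D"
    then have "card D \<le> vec.dim (UNIV::('a^'n) set)" using vec.independent_card_le_dim[of D UNIV] by simp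
    then show False using vec_dim_card[where 'a='a and 'n='n] assms by simp
  qed
  thus ?thesis using vec.dependent_finite[OF assms(1)] by blast
qed

lemma dep_fun:
  fixes D :: "('n::finite \<Rightarrow> 'a::field) set"
  assumes "finite D" "card D > CARD('n)"
  shows "\<exists>u. (\<exists>w\<in>D. u w \<noteq> 0) \<and> (\<forall>j. (\<Sum>w\<in>D. u w * w j) = 0)"
proof -
  let ?E = "vec_lambda ` D"
  have inj: "inj_on vec_lambda D" by (simp add: inj_on_def)
  have "card ?E = card D" using card_image[OF inj] .
  then obtain u where u: "\<exists>e\<in>?E. u e \<noteq> 0" "(\<Sum>e\<in>?E. u e *s e) = 0"
    using dep_vec[of ?E] assms by auto
  have "(\<Sum>w\<in>D. u (vec_lambda w) * w j) = 0" for j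
  proof -
    have "0 = (\<Sum>e\<in>?E. u e *s e) $ j" using u by simp
    also have "\<dots> = (\<Sum>e\<in>?E. u e * e $ j)" by simp
    also have "\<dots> = (\<Sum>w\<in>D. u (vec_lambda w) * w j)"
      by (subst sum.reindex[OF inj]) simp
    finally show ?thesis by simp
  qed
  moreover have "\<exists>w\<in>D. u (vec_lambda w) \<noteq> 0" using u by auto
  ultimately show ?thesis by (intro exI[of _ "\<lambda>w. u (vec_lambda w)"]) auto
qed

lemma affine_dep:
  fixes Y :: "('n::finite \<Rightarrow> 'a::field) set"
  assumes "finite Y" "card Y = CARD('n) + 2"
  shows "\<exists>l. (\<exists>y\<in>Y. l y \<noteq> 0) \<and> (\<Sum>y\<in>Y. l y) = 0 \<and> (\<forall>j. (\<Sum>y\<in>Y. l y * y j) = 0)"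
proof -
  obtain p0 where p0: "p0 \<in> Y" using assms by fastforce
  define Z where "Z = Y - {p0}"
  have fZ: "finite Z" using assms Z_def by simp
  have cZ: "card Z = CARD('n) + 1" using assms p0 Z_def by simp
  define D where "D = (\<lambda>y. y - p0) ` Z"
  have inj: "inj_on (\<lambda>y. y - p0) Z" by (rule inj_onI) (simp add: fun_eq_iff)
  have "card D = card Z" unfolding D_def by (rule card_image[OF inj])
  then obtain u where u: "\<exists>w\<in>D. u w \<noteq> 0" "\<forall>j. (\<Sum>w\<in>D. u w * w j) = 0"
    using dep_fun[of D] fZ cZ D_def by auto
  define c where "c y = u (y - p0)" for y
  define l where "l y = (if y = p0 then - (\<Sum>z\<in>Z. c z) else c y)" for y
  have YZ: "Y = insert p0 Z" "p0 \<notin> Z" using p0 Z_def by auto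
  have sZ: "(\<Sum>z\<in>Z. l z) = (\<Sum>z\<in>Z. c z)" using YZ(2) by (intro sum.cong) (auto simp: l_def)
  have s1: "(\<Sum>y\<in>Y. l y) = 0"
    using YZ fZ sZ by (simp add: l_def)
  have s2: "(\<Sum>y\<in>Y. l y * y j) = 0" for j
  proof -
    have a: "(\<Sum>z\<in>Z. l z * z j) = (\<Sum>z\<in>Z. c z * z j)" using YZ(2) by (intro sum.cong) (auto simp: l_def)
    have b: "(\<Sum>w\<in>D. u w * w j) = (\<Sum>z\<in>Z. c z * (z j - p0 j))"
      unfolding D_def by (subst sum.reindex[OF inj]) (simp add: c_def)
    have "(\<Sum>y\<in>Y. l y * y j) = - (\<Sum>z\<in>Z. c z) * p0 j + (\<Sum>z\<in>Z. c z * z j)"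
      using YZ fZ a by (simp add: l_def)
    also have "\<dots> = (\<Sum>z\<in>Z. c z * (z j - p0 j))"
      by (simp add: right_diff_distrib sum_subtractf sum_distrib_right)
    finally show ?thesis using b u(2) by simp
  qed
  obtain w where w: "w \<in> D" "u w \<noteq> 0" using u by auto
  then obtain z where "z \<in> Z" "w = z - p0" using D_def by auto
  hence "z \<in> Y" "l z \<noteq> 0" using w YZ by (auto simp: l_def c_def)
  thus ?thesis using s1 s2 by blast
qed

lemma val_mult: assumes "valuation v" "x \<noteq> 0" "y \<noteq> 0" shows "v (x * y) = v x + v y"
  using assms unfolding valuation_def by blast

lemma val_one: assumes "valuation v" shows "v 1 = 0"
proof -
  have "v (1*1) = v 1 + v 1" using val_mult[OF assms, of 1 1] by simp
  thus ?thesis by simp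
qed

lemma val_neg: assumes "valuation v" "x \<noteq> 0" shows "v (-x) = v x"
proof -
  have "v ((-1)*(-1)) = v (-1) + v (-1)" using val_mult[OF assms(1), of "-1" "-1"] by simp
  hence h: "v (-1) + v (-1) = 0" using val_one[OF assms(1)] by simp
  have "v (-1) = 0"
  proof (rule ccontr)
    assume "v (-1) \<noteq> 0"
    then consider "v (-1) < 0" | "v (-1) > 0" by fastforce
    thus False using h add_neg_neg[of "v (-1)" "v (-1)"] add_pos_pos[of "v (-1)" "v (-1)"] by cases auto
  qed
  moreover have "v ((-1) * x) = v (-1) + v x" using val_mult[OF assms(1), of "-1" x] assms by simp
  ultimately show ?thesis by simp
qed

lemma val_div: assumes "valuation v" "x \<noteq> 0" "y \<noteq> 0" shows "v (x / y) = v x - v y"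
proof -
  have "v ((x/y) * y) = v (x/y) + v y" using val_mult[OF assms(1), of "x/y" y] assms by simp
  thus ?thesis using assms by (simp add: eq_diff_eq)
qed

lemma shatters_mono: "shatters F Y \<Longrightarrow> Z \<subseteq> Y \<Longrightarrow> shatters F Z"
  unfolding shatters_def
proof (intro equalityI subsetI)
  fix T assume sh: "{S \<inter> Y |S. S \<in> F} = Pow Y" and ZY: "Z \<subseteq> Y" and T: "T \<in> Pow Z"
  then have "T \<in> {S \<inter> Y |S. S \<in> F}" by auto
  then obtain S where "S \<in> F" "S \<inter> Y = T" by auto
  then have "S \<inter> Z = T" using T ZY by auto
  then show "T \<in> {S \<inter> Z |S. S \<in> F}" using \<open>S \<in> F\<close> by auto
qed auto

lemma no_shatter:
  fixes v :: "'a::field \<Rightarrow> 'g::linordered_ab_group_add"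
  assumes val: "valuation v"
  and Y: "finite (Y :: ('n::finite \<Rightarrow> 'a) set)" "card Y = CARD('n) + 2"
  shows "\<not> shatters (Conv v) Y"
proof
  assume sh: "shatters (Conv v) Y"
  obtain l where l: "\<exists>y\<in>Y. l y \<noteq> 0" "(\<Sum>y\<in>Y. l y) = 0" "\<forall>j. (\<Sum>y\<in>Y. l y * y j) = 0"
    using affine_dep[OF Y] by blast
  define N where "N = {y\<in>Y. l y \<noteq> 0}"
  have fN: "finite N" "N \<noteq> {}" using Y l N_def by auto
  have "Min ((\<lambda>y. v (l y)) ` N) \<in> (\<lambda>y. v (l y)) ` N" by (rule Min_in) (use fN in auto)
  then obtain y0 where y0: "y0 \<in> N" "v (l y0) = Min ((\<lambda>y. v (l y)) ` N)" by (metis imageE)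
  have mn: "v (l y0) \<le> v (l y)" if "y \<in> N" for y
    using y0 Min_le[of "(\<lambda>y. v (l y)) ` N"] fN that by auto
  have y0Y: "y0 \<in> Y" and l0: "l y0 \<noteq> 0" using y0 N_def by auto
  define Z where "Z = Y - {y0}"
  have fZ: "finite Z" using Y Z_def by simp
  have YZ: "Y = insert y0 Z" "y0 \<notin> Z" using y0Y Z_def by auto
  define mu where "mu y = - l y / l y0" for y
  have muO: "mu y \<in> val_ring v" if "y \<in> Y" for y
  proof (cases "l y = 0")
    case True thus ?thesis by (simp add: mu_def val_ring_def)
  next
    case False
    have "v (mu y) = v (- l y) - v (l y0)" unfolding mu_def using val_div[OF val _ l0, of "- l y"] False neg_equal_0_iff_equal by blast
    also have "\<dots> = v (l y) - v (l y0)" using val_neg[OF val False] by simp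
    finally have "v (mu y) \<ge> 0" using mn[of y] False that N_def by simp
    thus ?thesis by (simp add: val_ring_def)
  qed
  have sumZ: "(\<Sum>y\<in>Z. l y) = - l y0" using l(2) YZ fZ by (simp add: eq_neg_iff_add_eq_0 add.commute)
  have mu1: "(\<Sum>y\<in>Z. mu y) = 1"
    unfolding mu_def using sumZ l0 by (simp add: sum_divide_distrib[symmetric] sum_negf)
  have muc: "(\<Sum>y\<in>Z. mu y * y j) = y0 j" for j
  proof -
    have s: "(\<Sum>y\<in>Z. l y * y j) = - (l y0 * y0 j)" using l(3) YZ fZ
      by (simp add: eq_neg_iff_add_eq_0 add.commute)
    have "(\<Sum>y\<in>Z. mu y * y j) = - (\<Sum>y\<in>Z. l y * y j) / l y0"
      unfolding mu_def by (simp add: sum_divide_distrib[symmetric] sum_negf)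
    thus ?thesis using s l0 by simp
  qed
  have "Z \<in> Pow Y" using Z_def by auto
  then have "Z \<in> {S \<inter> Y |S. S \<in> Conv v}" using sh unfolding shatters_def by simp
  then obtain S where S: "S \<in> Conv v" "S \<inter> Y = Z" by blast
  obtain h where h: "bij_betw h {0..<card Z} Z" using ex_bij_betw_nat_finite[OF fZ] by blast
  have cv: "val_convex v S" using S(1) by (simp add: Conv_def)
  have key: "(\<lambda>j. \<Sum>i<n. \<alpha> i * x i j) \<in> S"
    if A: "(\<forall>i<n. x i \<in> S \<and> \<alpha> i \<in> val_ring v) \<and> (\<Sum>i<n. \<alpha> i) = 1" for n :: nat and x \<alpha>
  proof -
    have "\<forall>(n::nat) (x::nat \<Rightarrow> 'n \<Rightarrow> 'a) (\<alpha>::nat \<Rightarrow> 'a).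
        (\<forall>i<n. x i \<in> S \<and> \<alpha> i \<in> val_ring v) \<and> (\<Sum>i<n. \<alpha> i) = 1 \<longrightarrow>
        (\<lambda>j. \<Sum>i<n. \<alpha> i * x i j) \<in> S" using cv unfolding val_convex_def by assumption
    then show ?thesis using A by blast
  qed
  have hZ: "h i \<in> Z" if "i < card Z" for i using h that by (auto simp: bij_betw_def)
  have "(\<lambda>j. \<Sum>i<card Z. mu (h i) * h i j) \<in> S"
  proof (rule key)
    show "(\<forall>i<card Z. h i \<in> S \<and> mu (h i) \<in> val_ring v) \<and> (\<Sum>i<card Z. mu (h i)) = 1"
    proof
      show "\<forall>i<card Z. h i \<in> S \<and> mu (h i) \<in> val_ring v" using hZ S(2) muO YZ by blast
      have "(\<Sum>i<card Z. mu (h i)) = (\<Sum>y\<in>Z. mu y)"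
        using sum.reindex_bij_betw[OF h, of mu] by (simp add: lessThan_atLeast0)
      thus "(\<Sum>i<card Z. mu (h i)) = 1" using mu1 by simp
    qed
  qed
  moreover have "(\<lambda>j. \<Sum>i<card Z. mu (h i) * h i j) = y0"
  proof
    fix j
    have "(\<Sum>i<card Z. mu (h i) * h i j) = (\<Sum>y\<in>Z. mu y * y j)"
      using sum.reindex_bij_betw[OF h, of "\<lambda>y. mu y * y j"] by (simp add: lessThan_atLeast0)
    thus "(\<Sum>i<card Z. mu (h i) * h i j) = y0 j" using muc by simp
  qed
  ultimately have "y0 \<in> S \<inter> Y" using y0Y by simp
  thus False using S(2) YZ by blast
qed


lemma shatter_exists:
  fixes v :: "'a::field \<Rightarrow> 'g::linordered_ab_group_add"
  shows "\<exists>Y :: ('n::finite \<Rightarrow> 'a) set. finite Y \<and> card Y = CARD('n) + 1 \<and> shatters (Conv v) Y"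
proof -
  define e :: "'n \<Rightarrow> 'n \<Rightarrow> 'a" where "e k = (\<lambda>j. if j = k then 1 else 0)" for k
  define z0 :: "'n \<Rightarrow> 'a" where "z0 = (\<lambda>_. 0)"
  define Y where "Y = insert z0 (range e)"
  have inj: "inj e" by (rule injI) (simp add: e_def fun_eq_iff, metis zero_neq_one)
  have n0: "z0 \<notin> range e" by (auto simp: e_def z0_def fun_eq_iff) (metis zero_neq_one)
  have fY: "finite Y" using Y_def by simp
  have cY: "card Y = CARD('n) + 1" using Y_def n0 card_image[OF inj] by simp
  have "shatters (Conv v) Y"
    unfolding shatters_def
  proof (intro equalityI subsetI)
    fix T assume "T \<in> {S \<inter> Y |S. S \<in> Conv v}" thus "T \<in> Pow Y" by auto
  next
    fix T assume T: "T \<in> Pow Y"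
    define C where "C = {x :: 'n \<Rightarrow> 'a. (\<forall>k. e k \<notin> T \<longrightarrow> x k = 0) \<and> (z0 \<notin> T \<longrightarrow> (\<Sum>j\<in>UNIV. x j) = 1)}"
    have "val_convex v C" unfolding val_convex_def
    proof (intro allI impI)
      fix n :: nat and x :: "nat \<Rightarrow> 'n \<Rightarrow> 'a" and \<alpha> :: "nat \<Rightarrow> 'a"
      assume A: "(\<forall>i<n. x i \<in> C \<and> \<alpha> i \<in> val_ring v) \<and> (\<Sum>i<n. \<alpha> i) = 1"
      have c1: "(\<Sum>i<n. \<alpha> i * x i k) = 0" if "e k \<notin> T" for k
        using A that by (intro sum.neutral) (auto simp: C_def)
      have c2: "(\<Sum>j\<in>UNIV. \<Sum>i<n. \<alpha> i * x i j) = 1" if "z0 \<notin> T"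
      proof -
        have "(\<Sum>j\<in>UNIV. \<Sum>i<n. \<alpha> i * x i j) = (\<Sum>i<n. \<alpha> i * (\<Sum>j\<in>UNIV. x i j))"
          by (subst sum.swap) (simp add: sum_distrib_left)
        also have "\<dots> = (\<Sum>i<n. \<alpha> i)" using A that by (intro sum.cong) (auto simp: C_def)
        finally show ?thesis using A by simp
      qed
      show "(\<lambda>j. \<Sum>i<n. \<alpha> i * x i j) \<in> C" using c1 c2 by (simp add: C_def)
    qed
    hence CC: "C \<in> Conv v" by (simp add: Conv_def)
    have "C \<inter> Y = T"
    proof (intro equalityI subsetI)
      fix y assume y: "y \<in> C \<inter> Y"
      show "y \<in> T"
      proof (cases "y = z0")
        case True
        then show ?thesis using y by (auto simp: C_def z0_def)
      next
        case False
        then obtain k where k: "y = e k" using y Y_def by auto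
        have "y k = 1" using k by (simp add: e_def)
        then show ?thesis using y k by (auto simp: C_def)
      qed
    next
      fix y assume y: "y \<in> T"
      hence yY: "y \<in> Y" using T by auto
      have "y \<in> C"
      proof (cases "y = z0")
        case True
        then show ?thesis using y by (auto simp: C_def z0_def)
      next
        case False
        then obtain k where k: "y = e k" using yY Y_def by auto
        have s: "(\<Sum>j\<in>UNIV. e k j) = 1" by (simp add: e_def)
        have "e k' \<notin> T \<Longrightarrow> e k k' = 0" for k' using y k by (auto simp: e_def)
        then show ?thesis using k s by (auto simp: C_def)
      qed
      thus "y \<in> C \<inter> Y" using yY by simp
    qed
    thus "T \<in> {S \<inter> Y |S. S \<in> Conv v}" using CC by blast
  qed
  thus ?thesis using fY cY by blast
qed

theorem theorem4p8:
  fixes v :: "'a::field \<Rightarrow> 'g::linordered_ab_group_add"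
  assumes "valuation v"
  shows "vc_dim (Conv v :: ('n::finite \<Rightarrow> 'a) set set) = enat (card (UNIV :: 'n set) + 1)
    \<and> (\<exists>Y :: ('n \<Rightarrow> 'a) set. finite Y \<and> card Y = card (UNIV :: 'n set) + 1 \<and> shatters (Conv v) Y)
    \<and> (\<forall>Y :: ('n \<Rightarrow> 'a) set. finite Y \<and> card Y = card (UNIV :: 'n set) + 2 \<longrightarrow> \<not> shatters (Conv v) Y)"
proof (intro conjI)
  show ex: "\<exists>Y :: ('n \<Rightarrow> 'a) set. finite Y \<and> card Y = card (UNIV :: 'n set) + 1 \<and> shatters (Conv v) Y"
    using shatter_exists[of v] by simp
  show no: "\<forall>Y :: ('n \<Rightarrow> 'a) set. finite Y \<and> card Y = card (UNIV :: 'n set) + 2 \<longrightarrow> \<not> shatters (Conv v) Y"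
    using no_shatter[OF assms] by blast
  have le: "card Y \<le> CARD('n) + 1" if "finite Y" "shatters (Conv v) (Y :: ('n \<Rightarrow> 'a) set)" for Y
  proof (rule ccontr)
    assume "\<not> card Y \<le> CARD('n) + 1"
    then obtain Z where "Z \<subseteq> Y" "card Z = CARD('n) + 2"
      using obtain_subset_with_card_n[of "CARD('n) + 2" Y] by force
    moreover then have "finite Z" using that finite_subset by blast
    ultimately show False using no shatters_mono[OF that(2)] by blast
  qed
  show "vc_dim (Conv v :: ('n::finite \<Rightarrow> 'a) set set) = enat (card (UNIV :: 'n set) + 1)"
    unfolding vc_dim_def
  proof (rule Sup_eqI)
    fix y assume "y \<in> {enat (card Y) |Y. finite Y \<and> shatters (Conv v :: ('n \<Rightarrow> 'a) set set) Y}"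
    then show "y \<le> enat (CARD('n) + 1)" using le by auto
  next
    fix y assume "\<And>z. z \<in> {enat (card Y) |Y. finite Y \<and> shatters (Conv v :: ('n \<Rightarrow> 'a) set set) Y} \<Longrightarrow> z \<le> y"
    then show "enat (CARD('n) + 1) \<le> y" using ex by force
  qed
qed

end
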